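(* Let $0<\lambda\le1$ and $f\in\mathcal U(\lambda)$ with $\dfrac{z}{f(z)}=1+\sum_{k=1}^\infty b_kz^k$ in $\mathbb D$. Then the function $F$ defined by $$\frac{z}{F(z)}=1+\sum_{n=1}^\infty b_{2n}z^n,\qquad z\in\mathbb D,$$ belongs to $\mathcal U(\lambda)$.
   Context: $\mathbb D=\{z\in\mathbb C:|z|<1\}$. $\mathcal A$ is the class of functions $f$ analytic in $\mathbb D$ with $f(z)=z+\sum_{k\ge2}a_kz^k$. For $f\in\mathcal A$ with $f(z)\ne0$ for $z\in\mathbb D\setminus\{0\}$, set $U_f(z)=\left(\frac{z}{f(z)}\right)^2f'(z)-1$. For $0<\lambda\le1$, $\mathcal U(\lambda)$ is the class of such $f\in\mathcal A$ with $|U_f(z)|<\lambda$ for all $z\in\mathbb D$. *)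

theory Defs
  imports "HOL-Analysis.Analysis"
begin

abbreviation unit_disk :: "complex set" where
  "unit_disk \<equiv> ball 0 1"

definition classA :: "(complex \<Rightarrow> complex) set" where
  "classA = {f. f holomorphic_on unit_disk \<and> f 0 = 0 \<and> deriv f 0 = 1}"

text \<open>U_f(z) = (z / f z)^2 f'(z) - 1 (meaningful for z \<noteq> 0; at z = 0 its
  analytic extension has value 0).\<close>
definition U_op :: "(complex \<Rightarrow> complex) \<Rightarrow> complex \<Rightarrow> complex" where
  "U_op f z = (z / f z)^2 * deriv f z - 1"

text \<open>Class U(lambda).  The bound is imposed on the punctured disk, since at
  z = 0 the (continuously extended) value of U_f is 0 < lambda.\<close>
definition classU :: "real \<Rightarrow> (complex \<Rightarrow> complex) set" where
  "classU lam = {f. f \<in> classA \<and> (\<forall>z\<in>unit_disk - {0}. f z \<noteq> 0)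
      \<and> (\<forall>z\<in>unit_disk - {0}. cmod (U_op f z) < lam)}"

end

theory Submission
  imports Defs "HOL-Complex_Analysis.Complex_Analysis"
begin



lemma ps_deriv:
  fixes c :: "nat \<Rightarrow> complex"
  assumes S: "\<And>z. norm z < 1 \<Longrightarrow> summable (\<lambda>n. c n * z^n)" and z: "norm z < 1"
  shows "((\<lambda>x. \<Sum>n. c n * x^n) has_field_derivative (\<Sum>n. diffs c n * z^n)) (at z)"
proof -
  define r where "r = (1 + norm z)/2"
  have r: "r > 0" unfolding r_def by (simp add: add_pos_nonneg)
  let ?K = "complex_of_real r"
  have "norm ?K = r" using r by simp
  then have "norm ?K < 1" "norm z < norm ?K" using z unfolding r_def by auto
  then show ?thesis using termdiffs_strong[of c ?K z] S by auto
qed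

lemma ps_diffs_summable:
  fixes c :: "nat \<Rightarrow> complex"
  assumes S: "\<And>z. norm z < 1 \<Longrightarrow> summable (\<lambda>n. c n * z^n)" and z: "norm z < 1"
  shows "summable (\<lambda>n. diffs c n * z^n)"
  using termdiff_converges[of z 1 c] S z by auto

lemma ps_holo:
  fixes c :: "nat \<Rightarrow> complex"
  assumes S: "\<And>z. norm z < 1 \<Longrightarrow> summable (\<lambda>n. c n * z^n)"
  shows "(\<lambda>x. \<Sum>n. c n * x^n) holomorphic_on unit_disk"
  using ps_deriv[OF S] by (subst holomorphic_on_open) (auto, blast)

lemma even_part:
  fixes c :: "nat \<Rightarrow> complex"
  assumes "(\<lambda>n. c n * z^n) sums s" "(\<lambda>n. c n * (-z)^n) sums t" "c 0 = 0"
  shows "(\<lambda>n. 2 * c (2*Suc n) * (z^2)^Suc n) sums (s + t)"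
proof -
  define d where "d n = c n * z^n + c n * (-z)^n" for n
  have "d sums (s+t)" unfolding d_def using sums_add[OF assms(1,2)] .
  moreover have "strict_mono (\<lambda>m::nat. 2*m)" by (auto simp: strict_mono_def)
  moreover have "d n = 0" if "n \<notin> range (\<lambda>m::nat. 2*m)" for n
  proof -
    have "odd n" using that by (metis evenE rangeI)
    then show ?thesis by (simp add: d_def)
  qed
  ultimately have "(\<lambda>m. d (2*m)) sums (s+t)" using sums_mono_reindex by blast
  moreover have "d (2*m) = 2 * c (2*m) * (z^2)^m" for m
    by (simp add: d_def power_mult)
  ultimately have "(\<lambda>m. 2 * c (2*m) * (z^2)^m) sums (s+t)" by simp
  then show ?thesis by (subst sums_Suc_iff) (simp add: assms(3))
qed


theorem mainTheorem14:
  fixes lam :: real and f :: "complex \<Rightarrow> complex" and b :: "nat \<Rightarrow> complex"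
  assumes "0 < lam" and "lam \<le> 1"
    and "f \<in> classU lam"
    and "\<forall>z\<in>unit_disk - {0}. (\<lambda>k. b (Suc k) * z ^ Suc k) sums (z / f z - 1)"
  shows "(\<forall>z\<in>unit_disk. summable (\<lambda>n. b (2 * Suc n) * z ^ Suc n))
    \<and> (\<lambda>z. z / (1 + (\<Sum>n. b (2 * Suc n) * z ^ Suc n))) \<in> classU lam"
proof -
  from assms(3) have fH: "f holomorphic_on unit_disk"
    and fnz: "\<And>z. z \<in> unit_disk - {0} \<Longrightarrow> f z \<noteq> 0"
    and fU: "\<And>z. z \<in> unit_disk - {0} \<Longrightarrow> cmod (U_op f z) < lam"
    by (auto simp: classU_def classA_def)
  define a where "a n = (if n = 0 then 0 else b n)" for n
  define G where "G z = (\<Sum>n. a n * z^n)" for z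
  define G' where "G' z = (\<Sum>n. diffs a n * z^n)" for z
  have a0: "a 0 = 0" by (simp add: a_def)
  have aS: "(\<lambda>n. a n * z^n) sums (z / f z - 1)" if "norm z < 1" "z \<noteq> 0" for z
  proof -
    have "(\<lambda>k. b (Suc k) * z ^ Suc k) sums (z / f z - 1)" using assms(4) that by auto
    hence "(\<lambda>k. a (Suc k) * z ^ Suc k) sums (z / f z - 1)" by (simp add: a_def)
    thus ?thesis by (subst (asm) sums_Suc_iff) (simp add: a_def)
  qed
  have aSum: "summable (\<lambda>n. a n * z^n)" if "norm z < 1" for z
  proof (cases "z = 0")
    case True
    then show ?thesis using powser_sums_zero[of a] by (auto simp: sums_iff)
  next
    case False
    then show ?thesis using aS[of z] that by (auto simp: sums_iff)
  qed
  have Gd: "(G has_field_derivative G' z) (at z)" if "norm z < 1" for z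
    unfolding G_def G'_def using ps_deriv[OF aSum that] by blast
  have G0: "G 0 = 0" by (simp add: G_def a0)
  have Gf: "1 + G z = z / f z" if "norm z < 1" "z \<noteq> 0" for z
  proof -
    have "G z = z / f z - 1" using aS[OF that] unfolding G_def by (simp add: sums_iff)
    then show ?thesis by simp
  qed
  have pbound: "cmod (z * G' z - G z) < lam" if "norm z < 1" "z \<noteq> 0" for z
  proof -
    have fz: "f z \<noteq> 0" using fnz that by auto
    have hz: "1 + G z \<noteq> 0" using Gf[OF that] fz that by auto
    have "((\<lambda>x. x / (1 + G x)) has_field_derivative ((1 + G z) - z * G' z)/(1+G z)^2) (at z)"
      using Gd[OF that(1)] hz by (auto intro!: derivative_eq_intros simp: field_simps power2_eq_square)
    then have "(f has_field_derivative ((1 + G z) - z * G' z)/(1+G z)^2) (at z)"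
    proof (rule has_field_derivative_transform_within_open[where S="unit_disk - {0}"])
      show "open (unit_disk - {0})" by auto
      show "z \<in> unit_disk - {0}" using that by auto
      fix x assume x: "x \<in> unit_disk - {0}"
      then have "f x \<noteq> 0" using fnz by auto
      then show "x / (1 + G x) = f x" using Gf[of x] x by auto
    qed
    then have "deriv f z = ((1 + G z) - z * G' z)/(1+G z)^2" by (rule DERIV_imp_deriv)
    then have "U_op f z = (1 + G z)^2 * (((1 + G z) - z * G' z)/(1+G z)^2) - 1"
      unfolding U_op_def using Gf[OF that, symmetric] by simp
    also have "\<dots> = G z - z * G' z" using hz by simp
    finally have "U_op f z = G z - z * G' z" .
    then show ?thesis using fU[of z] that by (simp add: norm_minus_commute)
  qed
  define c where "c n = a (2 * Suc n)" for n
  define V where "V w = (\<Sum>n. c n * w^n)" for w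
  define V' where "V' w = (\<Sum>n. diffs c n * w^n)" for w
  have Gs: "(\<lambda>n. a n * z^n) sums G z" if "norm z < 1" for z
    using aSum[OF that] unfolding G_def by (simp add: summable_sums)
  have even: "(\<lambda>n. 2 * c n * (z^2)^Suc n) sums (G z + G (-z))" if "norm z < 1" for z
    using even_part[OF Gs[OF that] Gs[of "-z"] a0] that unfolding c_def by simp
  have cSum: "summable (\<lambda>n. c n * w^n)" if "norm w < 1" for w
  proof (cases "w = 0")
    case True
    then show ?thesis using powser_sums_zero[of c] by (auto simp: sums_iff)
  next
    case False
    define z where "z = csqrt w"
    have z: "norm z < 1" "z^2 = w" using that unfolding z_def by auto
    have "summable (\<lambda>n. 2 * c n * w^Suc n)" using even[OF z(1)] z(2) by (auto simp: sums_iff)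
    then have "summable (\<lambda>n. (2 * c n * w^Suc n) * (1 / (2*w)))" by (rule summable_mult2)
    moreover have "(2 * c n * w^Suc n) * (1 / (2*w)) = c n * w^n" for n using False by simp
    ultimately show ?thesis by simp
  qed
  have Vd: "(V has_field_derivative V' w) (at w)" if "norm w < 1" for w
    unfolding V_def V'_def using ps_deriv[OF cSum that] by blast
  have V'Sum: "summable (\<lambda>n. diffs c n * w^n)" if "norm w < 1" for w
    using ps_diffs_summable[OF cSum that] by blast
  have VH: "V holomorphic_on unit_disk" unfolding V_def using ps_holo[OF cSum] by blast
  have V'H: "V' holomorphic_on unit_disk" unfolding V'_def using ps_holo[OF V'Sum] by blast
  have H: "G z + G (-z) = 2 * z^2 * V (z^2)" if "norm z < 1" for z
  proof -
    have w: "norm (z^2) < 1" using that by (simp add: norm_power power_less_one_iff)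
    have "(\<lambda>n. c n * (z^2)^n) sums V (z^2)" using cSum[OF w] unfolding V_def by (simp add: summable_sums)
    then have "(\<lambda>n. 2 * z^2 * (c n * (z^2)^n)) sums (2 * z^2 * V (z^2))" by (rule sums_mult)
    moreover have "2 * z^2 * (c n * (z^2)^n) = 2 * c n * (z^2)^Suc n" for n by simp
    ultimately have "(\<lambda>n. 2 * c n * (z^2)^Suc n) sums (2 * z^2 * V (z^2))" by simp
    then show ?thesis using even[OF that] sums_unique2 by blast
  qed
  have Hd: "G' z - G' (-z) = 4*z*V(z^2) + 4*z^3 * V'(z^2)" if "norm z < 1" for z
  proof -
    have w: "norm (z^2) < 1" using that by (simp add: norm_power power_less_one_iff)
    have mz: "norm (-z) < 1" using that by simp
    have d1: "((\<lambda>x. G x + G (-x)) has_field_derivative (G' z - G' (-z))) (at z)"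
      by (rule DERIV_cong[OF DERIV_add[OF Gd[OF that] DERIV_chain2[OF Gd[OF mz] DERIV_minus[OF DERIV_ident]]]]) simp
    have d2: "((\<lambda>x. 2 * x^2 * V (x^2)) has_field_derivative (4*z*V(z^2) + 4*z^3 * V'(z^2))) (at z)"
      by (rule DERIV_cong[OF DERIV_mult[OF DERIV_cmult[OF DERIV_power[OF DERIV_ident, of 2 z]] DERIV_chain2[OF Vd[OF w] DERIV_power[OF DERIV_ident, of 2 z]]]])
        (simp add: power2_eq_square power3_eq_cube algebra_simps)
    have d1': "((\<lambda>x. 2 * x^2 * V (x^2)) has_field_derivative (G' z - G' (-z))) (at z)"
      by (rule has_field_derivative_transform_within_open[OF d1, where S=unit_disk]) (use that H in auto)
    show ?thesis using DERIV_unique[OF d1' d2] .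
  qed
  define Q where "Q w = V w + 2 * w * V' w" for w
  have E: "z^2 * Q (z^2) = ((z * G' z - G z) + ((-z) * G' (-z) - G (-z))) / 2" if "norm z < 1" for z
    using H[OF that] Hd[OF that] unfolding Q_def
    by (simp add: field_simps power2_eq_square power3_eq_cube)
  have QH: "Q holomorphic_on unit_disk" unfolding Q_def
    by (intro holomorphic_intros VH V'H)
  have Pb: "norm (w * Q w) < lam" if "norm w < 1" for w
  proof (cases "w = 0")
    case True then show ?thesis using assms(1) by simp
  next
    case False
    define z where "z = csqrt w"
    have z: "norm z < 1" "z^2 = w" "z \<noteq> 0" using that False unfolding z_def by auto
    have "norm (w * Q w) = norm (((z * G' z - G z) + ((-z) * G' (-z) - G (-z))) / 2)"
      using E[OF z(1)] z(2) by metis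
    also have "\<dots> \<le> (norm (z * G' z - G z) + norm ((-z) * G' (-z) - G (-z))) / 2"
      by (simp add: norm_triangle_ineq)
    also have "\<dots> < lam" using pbound[OF z(1) z(3)] pbound[of "-z"] z by simp
    finally show ?thesis .
  qed
  have Qb1: "norm (Q w) \<le> lam" if "norm w < 1" "w \<noteq> 0" for w
  proof -
    have "norm ((\<lambda>w. w * Q w / lam) w) \<le> norm w"
    proof (rule Schwarz_Lemma(1))
      show "(\<lambda>w. w * Q w / of_real lam) holomorphic_on unit_disk" using assms(1) by (intro holomorphic_intros QH) auto
      show "norm (w * Q w / lam) < 1" if "norm w < 1" for w
        using Pb[OF that] assms(1) by (simp add: norm_divide)
    qed (use that in auto)
    then have "norm w * norm (Q w) / lam \<le> norm w" using assms(1) by (simp add: norm_divide norm_mult)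
    then show ?thesis using that assms(1) by (simp add: field_simps)
  qed
  have Qb: "norm (Q w) \<le> lam" if "norm w < 1" for w
  proof (cases "w = 0")
    case False then show ?thesis using Qb1 that by auto
  next
    case True
    have "isCont Q 0" using QH holomorphic_on_imp_continuous_on continuous_on_eq_continuous_at
      by (metis centre_in_ball open_ball zero_less_one)
    then have "(Q \<longlongrightarrow> Q 0) (at 0)" by (simp add: isCont_def)
    moreover have "eventually (\<lambda>x. norm (Q x) \<le> lam) (at 0)"
      unfolding eventually_at by (rule exI[of _ 1]) (auto intro: Qb1)
    ultimately have "norm (Q 0) \<le> lam" by (intro Lim_norm_ubound) auto
    then show ?thesis using True by simp
  qed
  have Vb: "norm (V w) \<le> lam" if "norm w < 1" for w
  proof -
    have sw: "norm (\<zeta>^2 * w) < 1" if "\<zeta> \<in> cball 0 1" for \<zeta> :: complex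
    proof -
      have "norm (\<zeta>^2) \<le> 1" using that by (simp add: norm_power power_le_one)
      then have "norm (\<zeta>^2) * norm w < 1"
        using \<open>norm w < 1\<close> by (smt (verit) mult_left_le_one_le norm_ge_zero)
      then show ?thesis by (simp add: norm_mult)
    qed
    have "norm ((\<lambda>\<zeta>. \<zeta> * V (\<zeta>^2 * w)) 1 - (\<lambda>\<zeta>. \<zeta> * V (\<zeta>^2 * w)) 0) \<le> lam * norm (1 - (0::complex))"
    proof (rule field_differentiable_bound[where S="cball 0 1" and f'="\<lambda>\<zeta>. Q (\<zeta>^2 * w)"])
      fix \<zeta> :: complex assume z: "\<zeta> \<in> cball 0 1"
      have "((\<lambda>\<zeta>. \<zeta> * V (\<zeta>^2 * w)) has_field_derivative Q (\<zeta>^2 * w)) (at \<zeta>)"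
        by (rule DERIV_cong[OF DERIV_mult[OF DERIV_ident DERIV_chain2[OF Vd[OF sw[OF z]]
              DERIV_cmult_right[OF DERIV_power[OF DERIV_ident, of 2 \<zeta>], of w]]]])
          (simp add: Q_def power2_eq_square algebra_simps)
      then show "((\<lambda>\<zeta>. \<zeta> * V (\<zeta>^2 * w)) has_field_derivative Q (\<zeta>^2 * w)) (at \<zeta> within cball 0 1)"
        by (rule has_field_derivative_at_within)
      show "norm (Q (\<zeta>^2 * w)) \<le> lam" using Qb[OF sw[OF z]] .
    qed auto
    then show ?thesis by simp
  qed
  have V'b: "norm (w * V' w) \<le> lam" if "norm w < 1" for w
  proof -
    have "2 * (w * V' w) = Q w - V w" unfolding Q_def by simp
    then have "2 * norm (w * V' w) = norm (Q w - V w)" by (metis norm_mult norm_numeral)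
    also have "\<dots> \<le> norm (Q w) + norm (V w)" by (rule norm_triangle_ineq4)
    finally show ?thesis using Qb[OF that] Vb[OF that] by simp
  qed
  have Ss: "(\<lambda>n. b (2 * Suc n) * z ^ Suc n) sums (z * V z)" if "norm z < 1" for z
  proof -
    have "(\<lambda>n. c n * z^n) sums V z" using cSum[OF that] unfolding V_def by (simp add: summable_sums)
    then have "(\<lambda>n. z * (c n * z^n)) sums (z * V z)" by (rule sums_mult)
    moreover have "z * (c n * z^n) = b (2 * Suc n) * z ^ Suc n" for n by (simp add: c_def a_def)
    ultimately show ?thesis by simp
  qed
  define F where "F = (\<lambda>z. z / (1 + (\<Sum>n. b (2 * Suc n) * z ^ Suc n)))"
  define F1 where "F1 z = z / (1 + z * V z)" for z
  have FF1: "F z = F1 z" if "norm z < 1" for z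
    unfolding F_def F1_def using Ss[OF that] by (simp add: sums_iff)
  have zV: "norm (z * V z) < 1" if "norm z < 1" for z
  proof -
    have "norm (z * V z) \<le> norm z * lam" unfolding norm_mult
      by (rule mult_left_mono[OF Vb[OF that]]) simp
    also have "\<dots> \<le> norm z" using assms(2) by (simp add: mult_left_le)
    finally show ?thesis using that by simp
  qed
  have hnz: "1 + z * V z \<noteq> 0" if "norm z < 1" for z
  proof
    assume "1 + z * V z = 0"
    then have "z * V z = -1" by (simp add: add_eq_0_iff)
    then show False using zV[OF that] by simp
  qed
  define F1' where "F1' z = ((1 + z * V z) - z * (V z + z * V' z)) / (1 + z * V z)^2" for z
  have F1d: "(F1 has_field_derivative F1' z) (at z)" if "norm z < 1" for z
    unfolding F1_def F1'_def using Vd[OF that] hnz[OF that]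
    by (auto intro!: derivative_eq_intros simp: power2_eq_square)
  have Fd: "(F has_field_derivative F1' z) (at z)" if "norm z < 1" for z
    by (rule has_field_derivative_transform_within_open[OF F1d[OF that], where S=unit_disk])
       (use that FF1 in auto)
  have "F holomorphic_on unit_disk"
    using Fd by (subst holomorphic_on_open) (auto, blast)
  moreover have "F 0 = 0" unfolding F_def by simp
  moreover have "deriv F 0 = 1"
    using DERIV_imp_deriv[OF Fd[of 0]] by (simp add: F1'_def)
  moreover have "F z \<noteq> 0" if "z \<in> unit_disk - {0}" for z
    using FF1[of z] that hnz[of z] by (auto simp: F1_def)
  moreover have "cmod (U_op F z) < lam" if "z \<in> unit_disk - {0}" for z
  proof -
    have z: "norm z < 1" "z \<noteq> 0" using that by auto
    have h: "1 + z * V z \<noteq> 0" using hnz[OF z(1)] .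
    have "z / F z = 1 + z * V z" using FF1[OF z(1)] z h by (simp add: F1_def)
    then have "U_op F z = (1 + z * V z)^2 * F1' z - 1"
      unfolding U_op_def using DERIV_imp_deriv[OF Fd[OF z(1)]] by simp
    also have "\<dots> = ((1 + z * V z) - z * (V z + z * V' z)) - 1" unfolding F1'_def using h by simp
    also have "\<dots> = - (z * (z * V' z))" by (simp add: algebra_simps)
    finally have "cmod (U_op F z) = norm z * norm (z * V' z)" by (simp add: norm_mult)
    also have "\<dots> \<le> norm z * lam" by (rule mult_left_mono[OF V'b[OF z(1)]]) simp
    also have "\<dots> < lam" using z assms(1) by simp
    finally show ?thesis .
  qed
  ultimately have "F \<in> classU lam" unfolding classU_def classA_def by auto
  moreover have "\<forall>z\<in>unit_disk. summable (\<lambda>n. b (2 * Suc n) * z ^ Suc n)"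
    using Ss by (auto simp: sums_iff)
  ultimately show ?thesis unfolding F_def by blast
qed
end
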